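(* Let $S$, $S'$ be Polish spaces, $(X_n)$, $(Y_n)$ sequences of $S$-valued random variables, and $g_n:S\to S'$ continuous functions. If $X_n//Y_n\to1$, then $g_n(X_n)//g_n(Y_n)\to1$.
   Context: For a random variable $X$, $\mathbb{P}_X$ denotes its law. Write $X_n//Y_n\to1$ if for each $n$, $\mathbb{P}_{X_n}$ is absolutely continuous with respect to $\mathbb{P}_{Y_n}$ with a density $f_n\ge0$ ($\mathbb{P}_{X_n}=f_n\mathbb{P}_{Y_n}$), and for every $\varepsilon>0$, $\mathbb{P}_{Y_n}(\{x:|f_n(x)-1|<\varepsilon\})\to1$ as $n\to\infty$. *)

theory Defs
  imports "HOL-Probability.Probability"
begin

definition dens_conv_one :: "(nat \<Rightarrow> 'a measure) \<Rightarrow> (nat \<Rightarrow> 'a measure) \<Rightarrow> bool" where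
  "dens_conv_one P Q \<longleftrightarrow>
     (\<exists>f :: nat \<Rightarrow> 'a \<Rightarrow> real.
        (\<forall>n. f n \<in> borel_measurable (Q n) \<and> (\<forall>x \<in> space (Q n). f n x \<ge> 0)
             \<and> P n = density (Q n) (\<lambda>x. ennreal (f n x)))
      \<and> (\<forall>\<epsilon>>0. (\<lambda>n. measure (Q n) {x \<in> space (Q n). \<bar>f n x - 1\<bar> < \<epsilon>}) \<longlonglongrightarrow> 1))"

definition ratio_conv_one ::
  "(nat \<Rightarrow> 'w1 measure) \<Rightarrow> (nat \<Rightarrow> 'w1 \<Rightarrow> 'a::topological_space)
   \<Rightarrow> (nat \<Rightarrow> 'w2 measure) \<Rightarrow> (nat \<Rightarrow> 'w2 \<Rightarrow> 'a) \<Rightarrow> bool" where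
  "ratio_conv_one M X N Y \<longleftrightarrow>
     dens_conv_one (\<lambda>n. distr (M n) borel (X n)) (\<lambda>n. distr (N n) borel (Y n))"

end

theory Submission imports Defs begin

lemma exists_real_density:
  assumes Q: "prob_space Q" and P: "finite_measure P" and s: "sets P = sets Q"
    and ac: "absolutely_continuous Q P"
  shows "\<exists>h. h \<in> borel_measurable Q \<and> (\<forall>x\<in>space Q. h x \<ge> 0) \<and> P = density Q (\<lambda>x. ennreal (h x))"
proof -
  interpret Q: prob_space Q by fact
  interpret P: finite_measure P by fact
  have fin: "AE x in Q. RN_deriv Q P x \<noteq> \<infinity>"
    by (rule Q.RN_deriv_finite[OF _ ac s]) (simp add: P.sigma_finite_measure_axioms)
  have m: "(\<lambda>x. enn2real (RN_deriv Q P x)) \<in> borel_measurable Q" by simp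
  have "P = density Q (RN_deriv Q P)" using Q.density_RN_deriv[OF ac s] by simp
  also have "\<dots> = density Q (\<lambda>x. ennreal (enn2real (RN_deriv Q P x)))"
  proof (rule density_cong)
    show "RN_deriv Q P \<in> borel_measurable Q" by simp
    show "(\<lambda>x. ennreal (enn2real (RN_deriv Q P x))) \<in> borel_measurable Q" using m by simp
    show "AE x in Q. RN_deriv Q P x = ennreal (enn2real (RN_deriv Q P x))"
      using fin by eventually_elim (simp add: less_top)
  qed
  finally have "P = density Q (\<lambda>x. ennreal (enn2real (RN_deriv Q P x)))" .
  then show ?thesis using m by (intro exI[of _ "\<lambda>x. enn2real (RN_deriv Q P x)"]) simp
qed

lemma ennreal_le_real: "ennreal a \<le> ennreal b \<Longrightarrow> 0 \<le> b \<Longrightarrow> a \<le> b"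
  using ennreal_le_iff by blast

lemma lower_bound:
  assumes Q: "prob_space Q" and f: "f \<in> borel_measurable Q" and fpos: "\<forall>x\<in>space Q. f x \<ge> 0"
    and P: "finite_measure (density Q (\<lambda>x. ennreal (f x)))"
    and C: "C \<in> sets Q" and d: "0 < d" "d \<le> 1"
  shows "measure Q C - measure (density Q (\<lambda>x. ennreal (f x))) C
      \<le> d + measure Q {x\<in>space Q. \<not> \<bar>f x - 1\<bar> < d}"
proof -
  interpret Q: prob_space Q by fact
  interpret P: finite_measure "density Q (\<lambda>x. ennreal (f x))" by fact
  define G where "G = {x\<in>space Q. \<bar>f x - 1\<bar> < d}"
  define B where "B = {x\<in>space Q. \<not> \<bar>f x - 1\<bar> < d}"
  have G[measurable]: "G \<in> sets Q" unfolding G_def using f by measurable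
  have B[measurable]: "B \<in> sets Q" unfolding B_def using f by measurable
  have "ennreal ((1 - d) * measure Q (C \<inter> G)) = ennreal (1-d) * emeasure Q (C \<inter> G)"
    using d by (simp add: Q.emeasure_eq_measure ennreal_mult)
  also have "\<dots> = (\<integral>\<^sup>+x. ennreal (1-d) * indicator (C \<inter> G) x \<partial>Q)"
    using C G by (simp add: nn_integral_cmult_indicator)
  also have "\<dots> \<le> (\<integral>\<^sup>+x. ennreal (f x) * indicator C x \<partial>Q)"
    by (rule nn_integral_mono) (auto simp: G_def indicator_def intro!: ennreal_leI)
  also have "\<dots> = emeasure (density Q (\<lambda>x. ennreal (f x))) C"
    using C f by (simp add: emeasure_density)
  also have "\<dots> = ennreal (measure (density Q (\<lambda>x. ennreal (f x))) C)"
    by (simp add: P.emeasure_eq_measure)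
  finally have 1: "(1 - d) * measure Q (C \<inter> G) \<le> measure (density Q (\<lambda>x. ennreal (f x))) C"
    by (simp add: ennreal_le_iff[symmetric] del: ennreal_le_iff) 
  have "C \<subseteq> (C \<inter> G) \<union> B" using sets.sets_into_space[OF C] unfolding G_def B_def by auto
  then have "measure Q C \<le> measure Q ((C \<inter> G) \<union> B)"
    using B C G by (intro Q.finite_measure_mono) auto
  also have "\<dots> \<le> measure Q (C \<inter> G) + measure Q B"
    using B C G by (intro measure_Un_le) auto
  finally have 2: "measure Q C \<le> measure Q (C \<inter> G) + measure Q B" .
  have 3: "measure Q (C \<inter> G) \<le> 1" by simp
  have "d * measure Q (C \<inter> G) \<le> d" using 3 d by (simp add: mult_left_le)
  moreover have "(1 - d) * measure Q (C \<inter> G) = measure Q (C \<inter> G) - d * measure Q (C \<inter> G)"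
    by (simp add: algebra_simps)
  ultimately show ?thesis using 1 2 unfolding B_def by linarith
qed

lemma key_bound:
  fixes g :: "'a \<Rightarrow> 'b::topological_space" and h :: "'b \<Rightarrow> real"
  assumes Q: "prob_space Q" and f: "f \<in> borel_measurable Q" and fpos: "\<forall>x\<in>space Q. f x \<ge> 0"
    and P: "prob_space (density Q (\<lambda>x. ennreal (f x)))"
    and g: "g \<in> measurable Q borel"
    and h: "h \<in> borel_measurable borel" and hpos: "\<And>x. h x \<ge> 0"
    and eq: "distr (density Q (\<lambda>x. ennreal (f x))) borel g = density (distr Q borel g) (\<lambda>x. ennreal (h x))"
    and d: "0 < d" "d \<le> 1" and e: "0 < e"
  shows "measure (distr Q borel g) {x. \<not> \<bar>h x - 1\<bar> < e}
      \<le> 2 * (d + measure Q {x\<in>space Q. \<not> \<bar>f x - 1\<bar> < d}) / e"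
proof -
  interpret Q: prob_space Q by fact
  define PP where "PP = density Q (\<lambda>x. ennreal (f x))"
  interpret P: prob_space PP unfolding PP_def by fact
  have finP: "finite_measure (density Q (\<lambda>x. ennreal (f x)))"
    using P.finite_measure_axioms unfolding PP_def .
  define bad where "bad = measure Q {x\<in>space Q. \<not> \<bar>f x - 1\<bar> < d}"
  have LB: "\<And>C. C \<in> sets Q \<Longrightarrow> measure Q C - measure PP C \<le> d + bad"
    unfolding PP_def bad_def using lower_bound[OF Q f fpos finP _ d] by blast
  have sP: "sets PP = sets Q" "space PP = space Q" unfolding PP_def by auto
  have gP: "g \<in> measurable PP borel" using g measurable_cong_sets[OF sP(1) refl] by blast
  interpret Q': prob_space "distr Q borel g" using Q.prob_space_distr[OF g] .
  have hQ': "(\<lambda>x. ennreal (h x)) \<in> borel_measurable (distr Q borel g)" using h by simp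
  have EQ: "\<And>A. A \<in> sets borel \<Longrightarrow> ennreal (measure PP (g -` A \<inter> space Q)) = (\<integral>\<^sup>+x. ennreal (h x) * indicator A x \<partial>distr Q borel g)"
  proof -
    fix A :: "'b set" assume A: "A \<in> sets borel"
    have "emeasure PP (g -` A \<inter> space Q) = emeasure (distr PP borel g) A"
      using emeasure_distr[OF gP A] sP by simp
    also have "\<dots> = (\<integral>\<^sup>+x. ennreal (h x) * indicator A x \<partial>distr Q borel g)"
      unfolding PP_def eq using A by (subst emeasure_density[OF hQ']) auto
    finally show "?thesis A" by (simp add: P.emeasure_eq_measure)
  qed
  have QC: "\<And>A. A \<in> sets borel \<Longrightarrow> measure (distr Q borel g) A = measure Q (g -` A \<inter> space Q)"
    using g by (simp add: measure_distr)
  define A1 where "A1 = {x. h x \<ge> 1 + e}"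
  define A2 where "A2 = {x. h x \<le> 1 - e}"
  have A1[measurable]: "A1 \<in> sets borel" unfolding A1_def using h by measurable
  have A2[measurable]: "A2 \<in> sets borel" unfolding A2_def using h by measurable
  define C1 where "C1 = g -` A1 \<inter> space Q"
  define C2 where "C2 = g -` A2 \<inter> space Q"
  have C1: "C1 \<in> sets Q" unfolding C1_def using g A1 by (rule measurable_sets)
  have C2: "C2 \<in> sets Q" unfolding C2_def using g A2 by (rule measurable_sets)
  have "ennreal ((1+e) * measure Q C1) = ennreal (1+e) * emeasure (distr Q borel g) A1"
    using e QC[OF A1] unfolding C1_def by (simp add: Q'.emeasure_eq_measure ennreal_mult)
  also have "\<dots> = (\<integral>\<^sup>+x. ennreal (1+e) * indicator A1 x \<partial>distr Q borel g)"
    using A1 by (simp add: nn_integral_cmult_indicator)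
  also have "\<dots> \<le> (\<integral>\<^sup>+x. ennreal (h x) * indicator A1 x \<partial>distr Q borel g)"
    by (rule nn_integral_mono) (auto simp: A1_def indicator_def intro!: ennreal_leI)
  finally have "ennreal ((1+e) * measure Q C1) \<le> ennreal (measure PP C1)"
    using EQ[OF A1] unfolding C1_def by simp
  then have 1: "(1+e) * measure Q C1 \<le> measure PP C1" by (simp add: ennreal_le_iff[symmetric] del: ennreal_le_iff)
  have D: "space Q - C1 \<in> sets Q" using C1 by auto
  have "measure Q (space Q - C1) = 1 - measure Q C1" using C1 Q.prob_compl by blast
  moreover have "measure PP (space Q - C1) = 1 - measure PP C1" using C1 P.prob_compl sP by metis
  ultimately have "e * measure Q C1 \<le> d + bad" using LB[OF D] 1 by (simp add: algebra_simps)
  then have b1: "measure Q C1 \<le> (d + bad) / e" using e by (simp add: field_simps)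
  have b2: "measure Q C2 \<le> (d + bad) / e"
  proof (cases "e \<le> 1")
    case True
    have "ennreal (measure PP C2) = (\<integral>\<^sup>+x. ennreal (h x) * indicator A2 x \<partial>distr Q borel g)"
      using EQ[OF A2] unfolding C2_def by simp
    also have "\<dots> \<le> (\<integral>\<^sup>+x. ennreal (1-e) * indicator A2 x \<partial>distr Q borel g)"
      by (rule nn_integral_mono) (auto simp: A2_def indicator_def intro!: ennreal_leI)
    also have "\<dots> = ennreal (1-e) * emeasure (distr Q borel g) A2"
      using A2 by (simp add: nn_integral_cmult_indicator)
    also have "\<dots> = ennreal ((1-e) * measure Q C2)"
      using True QC[OF A2] unfolding C2_def by (simp add: Q'.emeasure_eq_measure ennreal_mult)
    finally have 2: "measure PP C2 \<le> (1-e) * measure Q C2"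
      by (rule ennreal_le_real) (use True in simp)
    have "e * measure Q C2 \<le> d + bad" using LB[OF C2] 2 by (simp add: algebra_simps)
    then show ?thesis using e by (simp add: field_simps)
  next
    case False
    have "\<not> h x \<le> 1 - e" for x using hpos[of x] False by linarith
    then have "A2 = {}" unfolding A2_def by simp
    then have "C2 = {}" unfolding C2_def by simp
    moreover have "0 \<le> (d + bad) / e" using d e unfolding bad_def by simp
    ultimately show ?thesis by simp
  qed
  have "{x. \<not> \<bar>h x - 1\<bar> < e} = A1 \<union> A2" unfolding A1_def A2_def by auto
  then have "measure (distr Q borel g) {x. \<not> \<bar>h x - 1\<bar> < e} \<le> measure (distr Q borel g) A1 + measure (distr Q borel g) A2"
    using measure_Un_le[of A1 "distr Q borel g" A2] by simp
  also have "\<dots> = measure Q C1 + measure Q C2" using QC[OF A1] QC[OF A2] unfolding C1_def C2_def by simp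
  finally have X: "measure (distr Q borel g) {x. \<not> \<bar>h x - 1\<bar> < e} \<le> measure Q C1 + measure Q C2" .
  have "2 * (d + bad) / e = (d+bad)/e + (d+bad)/e" by (metis mult_2 add_divide_distrib)
  with X b1 b2 have "measure (distr Q borel g) {x. \<not> \<bar>h x - 1\<bar> < e} \<le> 2 * (d + bad) / e" by linarith
  then show ?thesis unfolding bad_def .
qed


theorem lemma11:
  fixes M :: "nat \<Rightarrow> 'w1 measure" and N :: "nat \<Rightarrow> 'w2 measure"
    and X :: "nat \<Rightarrow> 'w1 \<Rightarrow> 'a::polish_space" and Y :: "nat \<Rightarrow> 'w2 \<Rightarrow> 'a"
    and g :: "nat \<Rightarrow> 'a \<Rightarrow> 'b::polish_space"
  assumes "\<And>n. prob_space (M n)" and "\<And>n. prob_space (N n)"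
    and "\<And>n. X n \<in> borel_measurable (M n)" and "\<And>n. Y n \<in> borel_measurable (N n)"
    and "\<And>n. continuous_on UNIV (g n)"
    and "ratio_conv_one M X N Y"
  shows "ratio_conv_one M (\<lambda>n \<omega>. g n (X n \<omega>)) N (\<lambda>n \<omega>. g n (Y n \<omega>))"
proof -
  note MP = assms(1) and NP = assms(2) and Xm = assms(3) and Ym = assms(4)
  have gm: "\<And>n. g n \<in> borel_measurable borel" using assms(5) by (rule borel_measurable_continuous_onI)
  define P where "P n = distr (M n) borel (X n)" for n
  define Q where "Q n = distr (N n) borel (Y n)" for n
  obtain f where f: "\<And>n. f n \<in> borel_measurable (Q n)" "\<And>n. \<forall>x\<in>space (Q n). f n x \<ge> 0"
      "\<And>n. P n = density (Q n) (\<lambda>x. ennreal (f n x))"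
    and fconv: "\<And>\<epsilon>. \<epsilon> > 0 \<Longrightarrow> (\<lambda>n. measure (Q n) {x \<in> space (Q n). \<bar>f n x - 1\<bar> < \<epsilon>}) \<longlonglongrightarrow> 1"
    using assms(6) unfolding ratio_conv_one_def dens_conv_one_def P_def[symmetric] Q_def[symmetric] by blast
  have QP: "prob_space (Q n)" for n unfolding Q_def by (rule prob_space.prob_space_distr[OF NP Ym])
  have PP: "prob_space (P n)" for n unfolding P_def by (rule prob_space.prob_space_distr[OF MP Xm])
  have sQ: "space (Q n) = UNIV" "sets (Q n) = sets borel" for n unfolding Q_def by auto
  have gQ: "g n \<in> measurable (Q n) borel" for n using gm measurable_cong_sets[OF sQ(2) refl] by blast
  define Q' where "Q' n = distr (Q n) borel (g n)" for n
  define P' where "P' n = distr (P n) borel (g n)" for n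
  have Q'eq: "Q' n = distr (N n) borel (\<lambda>\<omega>. g n (Y n \<omega>))" for n
    unfolding Q'_def Q_def by (subst distr_distr[OF gm Ym]) (simp add: comp_def)
  have P'eq: "P' n = distr (M n) borel (\<lambda>\<omega>. g n (X n \<omega>))" for n
    unfolding P'_def P_def by (subst distr_distr[OF gm Xm]) (simp add: comp_def)
  have "\<exists>h. h \<in> borel_measurable (Q' n) \<and> (\<forall>x\<in>space (Q' n). h x \<ge> 0) \<and> P' n = density (Q' n) (\<lambda>x. ennreal (h x))" for n
  proof (rule exists_real_density)
    show "prob_space (Q' n)" unfolding Q'_def by (rule prob_space.prob_space_distr[OF QP gQ])
    have "prob_space (P' n)" unfolding P'_def
      by (rule prob_space.prob_space_distr[OF PP]) (simp add: P_def gm)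
    then show "finite_measure (P' n)" by (rule prob_space.finite_measure)
    show "sets (P' n) = sets (Q' n)" unfolding P'_def Q'_def by simp
    show "absolutely_continuous (Q' n) (P' n)"
      unfolding absolutely_continuous_def
    proof
      fix A assume A: "A \<in> null_sets (Q' n)"
      then have As: "A \<in> sets borel" and A0: "emeasure (Q n) (g n -` A \<inter> space (Q n)) = 0"
      proof -
        have As: "A \<in> sets borel" using A unfolding Q'_def null_sets_def by simp
        moreover have "emeasure (Q' n) A = 0" using A by auto
        ultimately show "A \<in> sets borel" "emeasure (Q n) (g n -` A \<inter> space (Q n)) = 0"
          unfolding Q'_def using emeasure_distr[OF gQ As] by auto
      qed
      have C: "g n -` A \<inter> space (Q n) \<in> sets (Q n)" using gQ As by (rule measurable_sets)
      have "emeasure (P n) (g n -` A \<inter> space (Q n)) = 0"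
      proof -
        have fe: "(\<lambda>x. ennreal (f n x)) \<in> borel_measurable (Q n)" using f(1) by simp
        show ?thesis unfolding f(3) using absolutely_continuousD[OF absolutely_continuousI_density[OF fe] C A0] .
      qed
      moreover have "emeasure (P' n) A = emeasure (P n) (g n -` A \<inter> space (P n))"
        unfolding P'_def by (rule emeasure_distr) (use gm As P_def in auto)
      moreover have "space (P n) = space (Q n)" unfolding P_def Q_def by simp
      ultimately show "A \<in> null_sets (P' n)" using As unfolding P'_def by (simp add: null_sets_def)
    qed
  qed
  then obtain h where h: "\<And>n. h n \<in> borel_measurable (Q' n)" "\<And>n. \<forall>x\<in>space (Q' n). h n x \<ge> 0"
      "\<And>n. P' n = density (Q' n) (\<lambda>x. ennreal (h n x))"
    by metis
  have sQ': "space (Q' n) = UNIV" "sets (Q' n) = sets borel" for n unfolding Q'_def by auto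
  have hb: "h n \<in> borel_measurable borel" for n using h(1) measurable_cong_sets[OF sQ'(2) refl] by blast
  have hpos: "h n x \<ge> 0" for n x using h(2) sQ' by auto
  have conv: "(\<lambda>n. measure (Q' n) {x \<in> space (Q' n). \<bar>h n x - 1\<bar> < e}) \<longlonglongrightarrow> 1" if e: "e > 0" for e
  proof (rule LIMSEQ_I)
    fix r :: real assume r: "r > 0"
    define d where "d = min 1 (r * e / 8)"
    have d: "0 < d" "d \<le> 1" "d \<le> r * e / 8" unfolding d_def using r e by auto
    obtain no where no: "\<And>n. n \<ge> no \<Longrightarrow> norm (measure (Q n) {x \<in> space (Q n). \<bar>f n x - 1\<bar> < d} - 1) < r * e / 8"
      using LIMSEQ_D[OF fconv[OF d(1)], of "r * e / 8"] r e by auto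
    show "\<exists>no. \<forall>n\<ge>no. norm (measure (Q' n) {x \<in> space (Q' n). \<bar>h n x - 1\<bar> < e} - 1) < r"
    proof (intro exI allI impI)
      fix n assume n: "n \<ge> no"
      interpret Qn: prob_space "Q n" by (rule QP)
      interpret Q'n: prob_space "Q' n" unfolding Q'_def by (rule prob_space.prob_space_distr[OF QP gQ])
      have fm: "{x \<in> space (Q n). \<bar>f n x - 1\<bar> < d} \<in> sets (Q n)" using f(1) by measurable
      have bad: "measure (Q n) {x \<in> space (Q n). \<not> \<bar>f n x - 1\<bar> < d}
          = 1 - measure (Q n) {x \<in> space (Q n). \<bar>f n x - 1\<bar> < d}"
      proof -
        have "{x \<in> space (Q n). \<not> \<bar>f n x - 1\<bar> < d} = space (Q n) - {x \<in> space (Q n). \<bar>f n x - 1\<bar> < d}" by auto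
        then show ?thesis using Qn.prob_compl[OF fm] by simp
      qed
      have badsmall: "measure (Q n) {x \<in> space (Q n). \<not> \<bar>f n x - 1\<bar> < d} < r * e / 8"
        using no[OF n] bad Qn.prob_le_1[of "{x \<in> space (Q n). \<bar>f n x - 1\<bar> < d}"] by simp
      have key: "measure (Q' n) {x. \<not> \<bar>h n x - 1\<bar> < e}
          \<le> 2 * (d + measure (Q n) {x\<in>space (Q n). \<not> \<bar>f n x - 1\<bar> < d}) / e"
        unfolding Q'_def
      proof (rule key_bound[OF QP f(1) f(2) _ gQ hb hpos _ d(1,2) e])
        show "prob_space (density (Q n) (\<lambda>x. ennreal (f n x)))" using PP f(3) by metis
        show "distr (density (Q n) (\<lambda>x. ennreal (f n x))) borel (g n) = density (distr (Q n) borel (g n)) (\<lambda>x. ennreal (h n x))"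
          using h(3)[of n] unfolding P'_def Q'_def f(3)[symmetric] .
      qed
      have "2 * (d + measure (Q n) {x\<in>space (Q n). \<not> \<bar>f n x - 1\<bar> < d}) < 2 * (r * e / 4)"
      proof -
        define R where "R = r * e"
        have "d \<le> R / 8" "measure (Q n) {x\<in>space (Q n). \<not> \<bar>f n x - 1\<bar> < d} < R / 8"
          using d(3) badsmall unfolding R_def by auto
        moreover have "\<And>m::real. d \<le> R / 8 \<Longrightarrow> m < R / 8 \<Longrightarrow> 2 * (d + m) < 2 * (R / 4)" by (simp add: field_simps)
        ultimately have "2 * (d + measure (Q n) {x\<in>space (Q n). \<not> \<bar>f n x - 1\<bar> < d}) < 2 * (R / 4)" by blast
        then show ?thesis unfolding R_def .
      qed
      also have "\<dots> = (r / 2) * e" by simp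
      finally have "2 * (d + measure (Q n) {x\<in>space (Q n). \<not> \<bar>f n x - 1\<bar> < d}) / e < r / 2"
        using e by (simp add: divide_less_eq)
      with key have k2: "measure (Q' n) {x. \<not> \<bar>h n x - 1\<bar> < e} < r / 2" by linarith
      have hm: "{x. \<bar>h n x - 1\<bar> < e} \<in> sets (Q' n)" using hb sQ' by measurable
      have "{x. \<not> \<bar>h n x - 1\<bar> < e} = space (Q' n) - {x. \<bar>h n x - 1\<bar> < e}" using sQ' by auto
      then have "measure (Q' n) {x. \<not> \<bar>h n x - 1\<bar> < e} = 1 - measure (Q' n) {x. \<bar>h n x - 1\<bar> < e}"
        using Q'n.prob_compl[OF hm] by simp
      moreover have "measure (Q' n) {x. \<bar>h n x - 1\<bar> < e} \<le> 1" by simp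
      moreover have "{x \<in> space (Q' n). \<bar>h n x - 1\<bar> < e} = {x. \<bar>h n x - 1\<bar> < e}" using sQ' by auto
      ultimately show "norm (measure (Q' n) {x \<in> space (Q' n). \<bar>h n x - 1\<bar> < e} - 1) < r"
        using k2 r by simp
    qed
  qed
  show ?thesis
    unfolding ratio_conv_one_def dens_conv_one_def P'eq[symmetric] Q'eq[symmetric]
    using h conv by blast
qed

end
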